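(* Consider a mobile robot with perfectly known state $x^R$ and known deterministic discrete-time dynamics $x^R_{t+1}=f^R(x^R_t,u_t)$, navigating a static but initially unmapped environment $\mathcal{W}\subseteq\mathbb{R}^3$. The robot's onboard perception conservatively identifies free regions and adds them to a known free space $\mathcal{W}^{\text{free}}(\eta_t)\subseteq\mathcal{W}$ at each time $t$, where $\eta_t$ is the robot's information state. Fix a horizon $H\ge1$ and a braking input $u^{\text{brake}}$, used as fallback policy $\pi^{\text{shield}}(\eta)\equiv u^{\text{brake}}$. Consider the model-predictive safety filter which, given a candidate action $u$ at information state $\eta$, lets $u$ through if applying $u$ and then $u^{\text{brake}}$ for the next $H-1$ steps brings the robot to a full stop while its position remains within the currently known free space $\mathcal{W}^{\text{free}}(\eta)$, and otherwise overrides $u$ with $u^{\text{brake}}$. Then, for every task policy, this filter maintains safety (the robot never collides with an obstacle) from any deployment information state $\eta_0$ in which the robot is at rest within the initially known free space $\mathcal{W}^{\text{free}}(\eta_0)$.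
   Context: "Conservatively identifies free regions" means that every point of $\mathcal{W}^{\text{free}}(\eta_t)$ is truly obstacle-free, and the known free space never shrinks: $\mathcal{W}^{\text{free}}(\eta_{t+1})\supseteq\mathcal{W}^{\text{free}}(\eta_t)$. A robot at a full stop (at rest) remains at rest at the same position when $u^{\text{brake}}$ is applied. Collision means the robot's position lies outside the true obstacle-free space; in particular a position inside the known free space is collision-free. *)

theory Defs
  imports "HOL-Analysis.Analysis"
begin

definition brake_rollout :: "('x \<Rightarrow> 'u \<Rightarrow> 'x) \<Rightarrow> 'u \<Rightarrow> nat \<Rightarrow> 'x \<Rightarrow> 'x" where
  "brake_rollout f ub k y = ((\<lambda>z. f z ub) ^^ k) y"

definition mps_certified ::
  "('x \<Rightarrow> 'u \<Rightarrow> 'x) \<Rightarrow> ('x \<Rightarrow> real^3) \<Rightarrow> ('x \<Rightarrow> bool) \<Rightarrow> 'u \<Rightarrow> nat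
   \<Rightarrow> (real^3) set \<Rightarrow> 'x \<Rightarrow> 'u \<Rightarrow> bool" where
  "mps_certified f pos at_rest ub H F x u \<longleftrightarrow>
     at_rest (brake_rollout f ub (H - 1) (f x u)) \<and>
     (\<forall>k < H. pos (brake_rollout f ub k (f x u)) \<in> F)"

definition mps_filter ::
  "('x \<Rightarrow> 'u \<Rightarrow> 'x) \<Rightarrow> ('x \<Rightarrow> real^3) \<Rightarrow> ('x \<Rightarrow> bool) \<Rightarrow> 'u \<Rightarrow> nat
   \<Rightarrow> ('i \<Rightarrow> (real^3) set) \<Rightarrow> 'x \<Rightarrow> 'i \<Rightarrow> 'u \<Rightarrow> 'u" where
  "mps_filter f pos at_rest ub H Wfree x \<eta> u =
     (if mps_certified f pos at_rest ub H (Wfree \<eta>) x u then u else ub)"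

end

theory Submission
  imports Defs
begin

lemma br_shift: "brake_rollout f ub k (f y ub) = brake_rollout f ub (Suc k) y"
  unfolding brake_rollout_def by (simp add: funpow_Suc_right del: funpow.simps)

lemma br_0: "brake_rollout f ub 0 y = y"
  unfolding brake_rollout_def by simp

theorem corollary4:
  fixes f :: "'x \<Rightarrow> 'u \<Rightarrow> 'x"
    and pos :: "'x \<Rightarrow> real^3"
    and at_rest :: "'x \<Rightarrow> bool"
    and ub :: 'u
    and H :: nat
    and W :: "(real^3) set"
    and Wfree :: "'i \<Rightarrow> (real^3) set"
    and \<pi> :: "'i \<Rightarrow> 'u"
    and \<eta> :: "nat \<Rightarrow> 'i"
    and x :: "nat \<Rightarrow> 'x"
  assumes H: "H \<ge> 1"
    and brake_rest: "\<And>y. at_rest y \<Longrightarrow> f y ub = y"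
    and conservative: "\<And>t. Wfree (\<eta> t) \<subseteq> W"
    and monotone: "\<And>t. Wfree (\<eta> t) \<subseteq> Wfree (\<eta> (Suc t))"
    and dyn: "\<And>t. x (Suc t) = f (x t) (mps_filter f pos at_rest ub H Wfree (x t) (\<eta> t) (\<pi> (\<eta> t)))"
    and init_rest: "at_rest (x 0)"
    and init_free: "pos (x 0) \<in> Wfree (\<eta> 0)"
  shows "\<forall>t. pos (x t) \<in> W"
proof -
  let ?I = "\<lambda>t. \<exists>m. at_rest (brake_rollout f ub m (x t)) \<and>
      (\<forall>k\<le>m. pos (brake_rollout f ub k (x t)) \<in> Wfree (\<eta> t))"
  have inv: "?I t" for t
  proof (induction t)
    case 0
    show ?case using init_rest init_free by (intro exI[of _ 0]) (simp add: br_0)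
  next
    case (Suc t)
    then obtain m where m1: "at_rest (brake_rollout f ub m (x t))"
      and m2: "\<forall>k\<le>m. pos (brake_rollout f ub k (x t)) \<in> Wfree (\<eta> t)" by blast
    show ?case
    proof (cases "mps_certified f pos at_rest ub H (Wfree (\<eta> t)) (x t) (\<pi> (\<eta> t))")
      case True
      hence xs: "x (Suc t) = f (x t) (\<pi> (\<eta> t))" using dyn by (simp add: mps_filter_def)
      show ?thesis
        apply (rule exI[of _ "H - 1"])
        using True H monotone[of t] unfolding xs mps_certified_def
        by (metis Suc_pred' le_imp_less_Suc less_le_trans subsetD zero_less_one)
    next
      case False
      hence xs: "x (Suc t) = f (x t) ub" using dyn by (simp add: mps_filter_def)
      show ?thesis
      proof (cases m)
        case 0
        hence "at_rest (x t)" using m1 by (simp add: br_0)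
        hence "x (Suc t) = x t" using xs brake_rest by simp
        thus ?thesis using m1 m2 monotone[of t] 0 by (metis subsetD)
      next
        case (Suc m')
        show ?thesis
          apply (rule exI[of _ m'])
          using m1 m2 monotone[of t] Suc unfolding xs br_shift
          by (metis Suc_le_mono subsetD)
      qed
    qed
  qed
  show ?thesis
  proof
    fix t
    from inv[of t] obtain m where "\<forall>k\<le>m. pos (brake_rollout f ub k (x t)) \<in> Wfree (\<eta> t)" by blast
    hence "pos (x t) \<in> Wfree (\<eta> t)" by (metis br_0 le0)
    thus "pos (x t) \<in> W" using conservative by blast
  qed
qed

end
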